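(* Let $\mathcal{B}\in\mathbb{R}^{l\times m\times n}$ and integers $r_1<k_1<l$, $r_2<k_2<m$, $r_3<k_3<n$, and let $\mathcal{C}\in\mathbb{R}^{k_1\times k_2\times k_3}$ be the leading subtensor $\mathcal{C}=\mathcal{B}(1{:}k_1,1{:}k_2,1{:}k_3)$. Define $f(X,Y,Z)=\|\mathcal{B}\cdot(X,Y,Z)\|^2$ on $\mathrm{Gr}^3=(\mathrm{Gr}(l,r_1),\mathrm{Gr}(m,r_2),\mathrm{Gr}(n,r_3))$ and $g(U,V,W)=\|\mathcal{C}\cdot(U,V,W)\|^2$ on $\mathrm{Gr}^3_k=(\mathrm{Gr}(k_1,r_1),\mathrm{Gr}(k_2,r_2),\mathrm{Gr}(k_3,r_3))$. Let $E_0=\left(\begin{pmatrix}I_{r_1}\\0\end{pmatrix},\begin{pmatrix}I_{r_2}\\0\end{pmatrix},\begin{pmatrix}I_{r_3}\\0\end{pmatrix}\right)\in\mathrm{Gr}^3$ and let $E_{0k}$ be the point of $\mathrm{Gr}^3_k$ given by the same block formulas (with zero blocks of the appropriate smaller sizes). If the Grassmann Hessian of $f$ is positive definite on the tangent space of $\mathrm{Gr}^3$ at $E_0$, then the Grassmann Hessian of $g$ is positive definite on the tangent space of $\mathrm{Gr}^3_k$ at $E_{0k}$.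
   Context: For a tensor $\mathcal{B}$ and matrices $X,Y,Z$ with compatible row dimensions, $\mathcal{B}\cdot(X,Y,Z)$ is the tensor with entries $\sum_{\alpha,\beta,\gamma}x_{\alpha i}y_{\beta j}z_{\gamma k}b_{\alpha\beta\gamma}$; norms are Frobenius norms. $\mathrm{Gr}(l,r)$ denotes the Grassmann manifold of $r$-dimensional subspaces of $\mathbb{R}^l$, a point being represented by a matrix $X\in\mathbb{R}^{l\times r}$ with orthonormal columns (the equivalence class $\{XQ: Q\in\mathbb{R}^{r\times r}\text{ orthogonal}\}$); the functions $f,g$ are well defined on these products since they are invariant under such right multiplications. The Grassmann Hessian is the Riemannian Hessian on the product manifold. *)

theory Defs
  imports "HOL-Analysis.Analysis"
begin

text \<open>Matrices are functions nat => nat => real with explicit dimensions (0-based indices);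
  tensors are functions nat => nat => nat => real.\<close>

type_synonym mat = "nat \<Rightarrow> nat \<Rightarrow> real"
type_synonym tensor3 = "nat \<Rightarrow> nat \<Rightarrow> nat \<Rightarrow> real"

definition tmult :: "tensor3 \<Rightarrow> nat \<Rightarrow> nat \<Rightarrow> nat \<Rightarrow> mat \<Rightarrow> mat \<Rightarrow> mat \<Rightarrow> tensor3" where
  "tmult B l m n X Y Z = (\<lambda>i j k. \<Sum>a<l. \<Sum>b<m. \<Sum>c<n. X a i * Y b j * Z c k * B a b c)"

definition tnorm2 :: "tensor3 \<Rightarrow> nat \<Rightarrow> nat \<Rightarrow> nat \<Rightarrow> real" where
  "tnorm2 T r1 r2 r3 = (\<Sum>i<r1. \<Sum>j<r2. \<Sum>k<r3. (T i j k)\<^sup>2)"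

definition objective :: "tensor3 \<Rightarrow> nat \<Rightarrow> nat \<Rightarrow> nat \<Rightarrow> nat \<Rightarrow> nat \<Rightarrow> nat \<Rightarrow> mat \<times> mat \<times> mat \<Rightarrow> real" where
  "objective B l m n r1 r2 r3 = (\<lambda>(X, Y, Z). tnorm2 (tmult B l m n X Y Z) r1 r2 r3)"

definition E0 :: "nat \<Rightarrow> nat \<Rightarrow> mat" where
  "E0 l r = (\<lambda>i j. if i < l \<and> j < r \<and> i = j then 1 else 0)"

text \<open>Tangent space of Gr(l,r) at X (horizontal space): l x r matrices D with X^T D = 0.\<close>
definition grass_tangent :: "nat \<Rightarrow> nat \<Rightarrow> mat \<Rightarrow> mat \<Rightarrow> bool" where
  "grass_tangent l r X D \<longleftrightarrow>
     (\<forall>i j. (l \<le> i \<or> r \<le> j) \<longrightarrow> D i j = 0) \<and>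
     (\<forall>i<r. \<forall>j<r. (\<Sum>a<l. X a i * D a j) = 0)"

text \<open>Along it, the second derivative of a smooth
  extension F at t = 0 equals  D^2F(X)[D,D] - tr(D^T D X^T grad F(X)), which is the
  Grassmann Hessian quadratic form (Edelman--Arias--Smith).\<close>
definition grass_curve :: "nat \<Rightarrow> nat \<Rightarrow> mat \<Rightarrow> mat \<Rightarrow> real \<Rightarrow> mat" where
  "grass_curve l r X D t = (\<lambda>i j.
     if i < l \<and> j < r then
       X i j + t * D i j - t\<^sup>2 / 2 * (\<Sum>p<r. X i p * (\<Sum>a<l. D a p * D a j))
     else 0)"

definition grass_hess3 ::
  "(mat \<times> mat \<times> mat \<Rightarrow> real) \<Rightarrow> nat \<Rightarrow> nat \<Rightarrow> nat \<Rightarrow> nat \<Rightarrow> nat \<Rightarrow> nat \<Rightarrow>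
   mat \<times> mat \<times> mat \<Rightarrow> mat \<times> mat \<times> mat \<Rightarrow> real" where
  "grass_hess3 F l m n r1 r2 r3 P D =
     (deriv ^^ 2) (\<lambda>t. F (grass_curve l r1 (fst P) (fst D) t,
                           grass_curve m r2 (fst (snd P)) (fst (snd D)) t,
                           grass_curve n r3 (snd (snd P)) (snd (snd D)) t)) 0"

definition grass_hess3_posdef ::
  "(mat \<times> mat \<times> mat \<Rightarrow> real) \<Rightarrow> nat \<Rightarrow> nat \<Rightarrow> nat \<Rightarrow> nat \<Rightarrow> nat \<Rightarrow> nat \<Rightarrow>
   mat \<times> mat \<times> mat \<Rightarrow> bool" where
  "grass_hess3_posdef F l m n r1 r2 r3 P \<longleftrightarrow>
     (\<forall>D1 D2 D3. grass_tangent l r1 (fst P) D1 \<and> grass_tangent m r2 (fst (snd P)) D2 \<and>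
        grass_tangent n r3 (snd (snd P)) D3 \<and> \<not> (D1 = (\<lambda>_ _. 0) \<and> D2 = (\<lambda>_ _. 0) \<and> D3 = (\<lambda>_ _. 0))
        \<longrightarrow> grass_hess3 F l m n r1 r2 r3 P (D1, D2, D3) > 0)"

end

theory Submission
  imports Defs
begin

lemma sum_beyond:
  fixes f :: "nat \<Rightarrow> real"
  assumes "k \<le> l" "\<And>a. k \<le> a \<Longrightarrow> f a = 0"
  shows "(\<Sum>a<l. f a) = (\<Sum>a<k. f a)"
  by (rule sum.mono_neutral_right) (use assms in auto)

lemma tangent_zero:
  assumes "grass_tangent k r X D" "k \<le> a"
  shows "D a j = 0"
  using assms unfolding grass_tangent_def by auto

lemma tangent_ext:
  assumes "grass_tangent k r (E0 k r) D" "r < k" "k < l"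
  shows "grass_tangent l r (E0 l r) D"
proof -
  have z: "\<And>a j. k \<le> a \<Longrightarrow> D a j = 0" using tangent_zero[OF assms(1)] .
  have "(\<Sum>a<l. E0 l r a i * D a j) = (\<Sum>a<k. E0 k r a i * D a j)" for i j
  proof -
    have "(\<Sum>a<l. E0 l r a i * D a j) = (\<Sum>a<k. E0 l r a i * D a j)"
      by (rule sum_beyond) (use assms z in auto)
    also have "\<dots> = (\<Sum>a<k. E0 k r a i * D a j)"
      by (rule sum.cong) (use assms in \<open>auto simp: E0_def\<close>)
    finally show ?thesis .
  qed
  then show ?thesis using assms unfolding grass_tangent_def by auto
qed

lemma curve_eq:
  assumes "grass_tangent k r (E0 k r) D" "r < k" "k < l"
  shows "grass_curve k r (E0 k r) D t = grass_curve l r (E0 l r) D t"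
proof -
  have z: "\<And>a j. k \<le> a \<Longrightarrow> D a j = 0" using tangent_zero[OF assms(1)] .
  have s: "(\<Sum>a<l. D a p * D a j) = (\<Sum>a<k. D a p * D a j)" for p j
    by (rule sum_beyond) (use assms z in auto)
  show ?thesis
  proof (intro ext)
    fix i j
    show "grass_curve k r (E0 k r) D t i j = grass_curve l r (E0 l r) D t i j"
    proof (cases "i < k")
      case True
      then show ?thesis using assms unfolding grass_curve_def s
        by (auto simp: E0_def intro!: sum.cong)
    next
      case False
      then show ?thesis using assms z[of i] unfolding grass_curve_def
        by (auto simp: E0_def)
    qed
  qed
qed

lemma curve_zero:
  assumes "r < k" "k \<le> a"
  shows "grass_curve k r (E0 k r) D t a j = 0"
  using assms unfolding grass_curve_def by auto

lemma tmult_eq: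
  assumes "k1 \<le> l" "k2 \<le> m" "k3 \<le> n"
    and "C = (\<lambda>a b c. if a < k1 \<and> b < k2 \<and> c < k3 then B a b c else 0)"
    and X: "\<And>a i. k1 \<le> a \<Longrightarrow> X a i = 0"
    and Y: "\<And>a i. k2 \<le> a \<Longrightarrow> Y a i = 0"
    and Z: "\<And>a i. k3 \<le> a \<Longrightarrow> Z a i = 0"
  shows "tmult C k1 k2 k3 X Y Z = tmult B l m n X Y Z"
proof (intro ext)
  fix i j k
  have "(\<Sum>a<l. \<Sum>b<m. \<Sum>c<n. X a i * Y b j * Z c k * B a b c)
      = (\<Sum>a<k1. \<Sum>b<m. \<Sum>c<n. X a i * Y b j * Z c k * B a b c)"
    by (rule sum_beyond) (use assms in auto)
  also have "\<dots> = (\<Sum>a<k1. \<Sum>b<k2. \<Sum>c<n. X a i * Y b j * Z c k * B a b c)"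
    by (rule sum.cong[OF refl], rule sum_beyond) (use assms in auto)
  also have "\<dots> = (\<Sum>a<k1. \<Sum>b<k2. \<Sum>c<k3. X a i * Y b j * Z c k * B a b c)"
    by (rule sum.cong[OF refl], rule sum.cong[OF refl], rule sum_beyond) (use assms in auto)
  also have "\<dots> = (\<Sum>a<k1. \<Sum>b<k2. \<Sum>c<k3. X a i * Y b j * Z c k * C a b c)"
    using assms(4) by simp
  finally show "tmult C k1 k2 k3 X Y Z i j k = tmult B l m n X Y Z i j k"
    unfolding tmult_def by simp
qed

theorem propositionA1:
  fixes B :: tensor3 and l m n k1 k2 k3 r1 r2 r3 :: nat
  assumes "r1 < k1" "k1 < l" "r2 < k2" "k2 < m" "r3 < k3" "k3 < n"
    and "C = (\<lambda>a b c. if a < k1 \<and> b < k2 \<and> c < k3 then B a b c else 0)"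
    and "grass_hess3_posdef (objective B l m n r1 r2 r3) l m n r1 r2 r3 (E0 l r1, E0 m r2, E0 n r3)"
  shows "grass_hess3_posdef (objective C k1 k2 k3 r1 r2 r3) k1 k2 k3 r1 r2 r3
           (E0 k1 r1, E0 k2 r2, E0 k3 r3)"
  unfolding grass_hess3_posdef_def
proof (intro allI impI)
  fix D1 D2 D3
  assume h: "grass_tangent k1 r1 (fst (E0 k1 r1, E0 k2 r2, E0 k3 r3)) D1 \<and>
        grass_tangent k2 r2 (fst (snd (E0 k1 r1, E0 k2 r2, E0 k3 r3))) D2 \<and>
        grass_tangent k3 r3 (snd (snd (E0 k1 r1, E0 k2 r2, E0 k3 r3))) D3 \<and>
        \<not> (D1 = (\<lambda>_ _. 0) \<and> D2 = (\<lambda>_ _. 0) \<and> D3 = (\<lambda>_ _. 0))"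
  then have t1: "grass_tangent k1 r1 (E0 k1 r1) D1" and t2: "grass_tangent k2 r2 (E0 k2 r2) D2"
    and t3: "grass_tangent k3 r3 (E0 k3 r3) D3"
    and nz: "\<not> (D1 = (\<lambda>_ _. 0) \<and> D2 = (\<lambda>_ _. 0) \<and> D3 = (\<lambda>_ _. 0))" by auto
  have T1: "grass_tangent l r1 (E0 l r1) D1" using tangent_ext[OF t1] assms by auto
  have T2: "grass_tangent m r2 (E0 m r2) D2" using tangent_ext[OF t2] assms by auto
  have T3: "grass_tangent n r3 (E0 n r3) D3" using tangent_ext[OF t3] assms by auto
  have pos: "grass_hess3 (objective B l m n r1 r2 r3) l m n r1 r2 r3 (E0 l r1, E0 m r2, E0 n r3) (D1, D2, D3) > 0"
    using assms(8) T1 T2 T3 nz unfolding grass_hess3_posdef_def by auto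
  have feq: "(\<lambda>t. objective C k1 k2 k3 r1 r2 r3
                 (grass_curve k1 r1 (E0 k1 r1) D1 t, grass_curve k2 r2 (E0 k2 r2) D2 t,
                  grass_curve k3 r3 (E0 k3 r3) D3 t))
           = (\<lambda>t. objective B l m n r1 r2 r3
                 (grass_curve l r1 (E0 l r1) D1 t, grass_curve m r2 (E0 m r2) D2 t,
                  grass_curve n r3 (E0 n r3) D3 t))"
  proof (intro ext)
    fix t
    have "tmult C k1 k2 k3 (grass_curve k1 r1 (E0 k1 r1) D1 t) (grass_curve k2 r2 (E0 k2 r2) D2 t)
                  (grass_curve k3 r3 (E0 k3 r3) D3 t)
        = tmult B l m n (grass_curve k1 r1 (E0 k1 r1) D1 t) (grass_curve k2 r2 (E0 k2 r2) D2 t)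
                  (grass_curve k3 r3 (E0 k3 r3) D3 t)"
      by (rule tmult_eq) (use assms curve_zero in auto)
    then show "objective C k1 k2 k3 r1 r2 r3
                 (grass_curve k1 r1 (E0 k1 r1) D1 t, grass_curve k2 r2 (E0 k2 r2) D2 t,
                  grass_curve k3 r3 (E0 k3 r3) D3 t)
           = objective B l m n r1 r2 r3
                 (grass_curve l r1 (E0 l r1) D1 t, grass_curve m r2 (E0 m r2) D2 t,
                  grass_curve n r3 (E0 n r3) D3 t)"
      unfolding objective_def
      using curve_eq[OF t1] curve_eq[OF t2] curve_eq[OF t3] assms by simp
  qed
  show "grass_hess3 (objective C k1 k2 k3 r1 r2 r3) k1 k2 k3 r1 r2 r3
          (E0 k1 r1, E0 k2 r2, E0 k3 r3) (D1, D2, D3) > 0"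
    using pos unfolding grass_hess3_def using feq by simp
qed

end
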